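(* Let $\omega=(\omega_1,\omega_2)\in\mathbb{R}^2$ be a frequency vector such that $\alpha:=\omega_1/\omega_2$ is irrational with (finite) Roth--Liouville irrationality measure $\mu(\alpha)$. Then $H^s_\omega\hookrightarrow Y^\sigma_\omega$ (continuous embedding) whenever $0\le\sigma<s-\mu(\alpha)+1$.
   Context: The Roth--Liouville irrationality measure $\mu(\alpha)$ is the supremum of all $\nu\ge1$ for which there exist infinitely many coprime pairs $(p,q)$, $q>0$, with $|\alpha-p/q|<q^{-\nu}$. On $\mathbb{T}^2=\mathbb{R}^2/\mathbb{Z}^2$ with Fourier coefficients $\hat u(n)$: $\langle\nabla\rangle^\sigma$ has symbol $\langle n\rangle^\sigma$, $\langle\partial_x\rangle$ has symbol $\langle\omega\cdot n\rangle$, $\partial_x^{-1}$ has symbol $\frac{1}{2\pi i\,\omega\cdot n}1_{n\ne0}$, where $\langle a\rangle=(1+|a|^2)^{1/2}$. $H^s_\omega$ is the usual Sobolev space $H^s(\mathbb{T}^2)$ (identified with quasi-periodic functions $x\mapsto g(x\omega)$), and $Y^\sigma_\omega$ is the closure of $C^\infty(\mathbb{T}^2)$ under $\|\langle\nabla\rangle^\sigma\langle\partial_x\rangle u\|_{L^2}+\|\langle\nabla\rangle^\sigma\partial_x^{-1}u\|_{L^2}$. *)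

theory Defs
  imports "HOL-Analysis.Analysis"
begin

text \<open>Functions on the torus T^2 are represented by their Fourier coefficient
  families u :: int \<times> int \<Rightarrow> complex (Plancherel identification).\<close>

type_synonym coeffs = "int \<times> int \<Rightarrow> complex"

definition jbr :: "real \<Rightarrow> real" where
  "jbr a = sqrt (1 + a\<^sup>2)"

definition jbrv :: "int \<times> int \<Rightarrow> real" where
  "jbrv n = sqrt (1 + (real_of_int (fst n))\<^sup>2 + (real_of_int (snd n))\<^sup>2)"

definition wdot :: "real \<times> real \<Rightarrow> int \<times> int \<Rightarrow> real" where
  "wdot \<omega> n = fst \<omega> * real_of_int (fst n) + snd \<omega> * real_of_int (snd n)"

definition Hs_weight :: "real \<Rightarrow> coeffs \<Rightarrow> int \<times> int \<Rightarrow> real" where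
  "Hs_weight s u n = jbrv n powr (2 * s) * (cmod (u n))\<^sup>2"

definition Hs_space :: "real \<Rightarrow> coeffs set" where
  "Hs_space s = {u. Hs_weight s u summable_on UNIV}"

definition Hs_norm :: "real \<Rightarrow> coeffs \<Rightarrow> real" where
  "Hs_norm s u = sqrt (infsum (Hs_weight s u) UNIV)"

definition Y_weight1 :: "real \<Rightarrow> real \<times> real \<Rightarrow> coeffs \<Rightarrow> int \<times> int \<Rightarrow> real" where
  "Y_weight1 \<sigma> \<omega> u n = (jbrv n powr \<sigma> * jbr (wdot \<omega> n))\<^sup>2 * (cmod (u n))\<^sup>2"

definition Y_weight2 :: "real \<Rightarrow> real \<times> real \<Rightarrow> coeffs \<Rightarrow> int \<times> int \<Rightarrow> real" where
  "Y_weight2 \<sigma> \<omega> u n =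
     (if n = 0 then 0 else (jbrv n powr \<sigma>)\<^sup>2 * (cmod (u n))\<^sup>2 / (2 * pi * wdot \<omega> n)\<^sup>2)"

definition Y_fin :: "real \<Rightarrow> real \<times> real \<Rightarrow> coeffs \<Rightarrow> bool" where
  "Y_fin \<sigma> \<omega> u \<longleftrightarrow> Y_weight1 \<sigma> \<omega> u summable_on UNIV \<and> Y_weight2 \<sigma> \<omega> u summable_on UNIV"

definition Y_norm :: "real \<Rightarrow> real \<times> real \<Rightarrow> coeffs \<Rightarrow> real" where
  "Y_norm \<sigma> \<omega> u = sqrt (infsum (Y_weight1 \<sigma> \<omega> u) UNIV) + sqrt (infsum (Y_weight2 \<sigma> \<omega> u) UNIV)"

text \<open>Fourier coefficients of C^infinity functions on T^2: rapidly decreasing families.\<close>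
definition smooth_coeffs :: "coeffs \<Rightarrow> bool" where
  "smooth_coeffs f \<longleftrightarrow> (\<forall>N::nat. \<exists>C. \<forall>n. jbrv n ^ N * cmod (f n) \<le> C)"

definition Y_space :: "real \<Rightarrow> real \<times> real \<Rightarrow> coeffs set" where
  "Y_space \<sigma> \<omega> = {v. \<exists>f :: nat \<Rightarrow> coeffs. (\<forall>k. smooth_coeffs (f k)) \<and>
      (\<forall>k. Y_fin \<sigma> \<omega> (\<lambda>n. v n - f k n)) \<and>
      (\<lambda>k. Y_norm \<sigma> \<omega> (\<lambda>n. v n - f k n)) \<longlonglongrightarrow> 0}"

definition approx_exponents :: "real \<Rightarrow> real set" where
  "approx_exponents \<alpha> = {\<nu>. \<nu> \<ge> 1 \<and>
     infinite {(p, q). (q::int) > 0 \<and> coprime (p::int) q \<and>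
                \<bar>\<alpha> - real_of_int p / real_of_int q\<bar> < real_of_int q powr (-\<nu>)}}"

definition irr_measure :: "real \<Rightarrow> real" where
  "irr_measure \<alpha> = Sup (approx_exponents \<alpha>)"

end

theory Submission
  imports Defs
begin

lemma dioph_bound:
  fixes \<alpha> \<nu> :: real
  assumes irr: "\<alpha> \<notin> \<rat>" and nu1: "\<nu> \<ge> 1" and nuE: "\<nu> \<notin> approx_exponents \<alpha>"
  shows "\<exists>c>0. \<forall>p q::int. q > 0 \<longrightarrow> \<bar>real_of_int q * \<alpha> - real_of_int p\<bar> \<ge> c * real_of_int q powr (1 - \<nu>)"
proof -
  define E where "E = {(p, q). (q::int) > 0 \<and> coprime (p::int) q \<and>
                \<bar>\<alpha> - real_of_int p / real_of_int q\<bar> < real_of_int q powr (-\<nu>)}"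
  have finE: "finite E" using nuE nu1 unfolding approx_exponents_def E_def by auto
  define g where "g = (\<lambda>(p::int, q::int). \<bar>real_of_int q * \<alpha> - real_of_int p\<bar> * real_of_int q powr (\<nu> - 1))"
  define c where "c = Min (insert 1 (g ` E))"
  have nz: "real_of_int q * \<alpha> - real_of_int p \<noteq> 0" if "q > 0" for p q :: int
  proof
    assume "real_of_int q * \<alpha> - real_of_int p = 0"
    then have "\<alpha> = real_of_int p / real_of_int q" using that by (auto simp: field_simps)
    then show False using irr by auto
  qed
  have gpos: "g x > 0" if "x \<in> E" for x
    using that nz by (auto simp: g_def E_def)
  have cpos: "c > 0" unfolding c_def using finE gpos by (subst Min_gr_iff) auto
  have c1: "c \<le> 1" unfolding c_def using finE by (intro Min_le) auto
  have cg: "c \<le> g x" if "x \<in> E" for x unfolding c_def using finE that by (intro Min_le) auto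
  have cop: "\<bar>real_of_int q * \<alpha> - real_of_int p\<bar> \<ge> c * real_of_int q powr (1 - \<nu>)"
    if q: "q > 0" and cp: "coprime p q" for p q :: int
  proof (cases "(p, q) \<in> E")
    case True
    have qp: "real_of_int q powr (\<nu> - 1) > 0" using q by simp
    have "c \<le> \<bar>real_of_int q * \<alpha> - real_of_int p\<bar> * real_of_int q powr (\<nu> - 1)"
      using cg[OF True] by (simp add: g_def)
    then have "c * real_of_int q powr (1 - \<nu>) \<le> \<bar>real_of_int q * \<alpha> - real_of_int p\<bar> * (real_of_int q powr (\<nu> - 1) * real_of_int q powr (1 - \<nu>))"
      using q by (simp add: mult_right_mono mult.assoc)
    also have "real_of_int q powr (\<nu> - 1) * real_of_int q powr (1 - \<nu>) = 1"
      using q by (simp add: powr_add[symmetric])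
    finally show ?thesis by simp
  next
    case False
    then have "\<bar>\<alpha> - real_of_int p / real_of_int q\<bar> \<ge> real_of_int q powr (-\<nu>)"
      using q cp by (auto simp: E_def)
    then have "real_of_int q * real_of_int q powr (-\<nu>) \<le> real_of_int q * \<bar>\<alpha> - real_of_int p / real_of_int q\<bar>"
      using q by (intro mult_left_mono) auto
    also have "real_of_int q * \<bar>\<alpha> - real_of_int p / real_of_int q\<bar> = \<bar>real_of_int q * (\<alpha> - real_of_int p / real_of_int q)\<bar>"
      using q by (simp add: abs_mult)
    also have "real_of_int q * (\<alpha> - real_of_int p / real_of_int q) = real_of_int q * \<alpha> - real_of_int p"
      using q by (simp add: field_simps)
    also have "real_of_int q * real_of_int q powr (-\<nu>) = real_of_int q powr (1 - \<nu>)"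
      using q by (simp add: powr_add[symmetric] powr_mult_base)
    finally have "real_of_int q powr (1 - \<nu>) \<le> \<bar>real_of_int q * \<alpha> - real_of_int p\<bar>" .
    moreover have "c * real_of_int q powr (1 - \<nu>) \<le> real_of_int q powr (1 - \<nu>)"
      using c1 cpos by (intro mult_left_le_one_le) auto
    ultimately show ?thesis by linarith
  qed
  have "\<bar>real_of_int q * \<alpha> - real_of_int p\<bar> \<ge> c * real_of_int q powr (1 - \<nu>)" if q: "q > 0" for p q :: int
  proof -
    define d where "d = gcd p q"
    have d0: "d > 0" using q by (simp add: d_def)
    obtain p' q' where pq: "p = d * p'" "q = d * q'" and cp: "coprime p' q'"
      using gcd_coprime_exists[of p q] q d_def by (metis gcd_eq_0_iff less_irrefl mult.commute)
    have q': "q' > 0" using pq(2) q d0 by (simp add: zero_less_mult_iff)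
    have "c * real_of_int q powr (1 - \<nu>) = c * (real_of_int d powr (1 - \<nu>) * real_of_int q' powr (1 - \<nu>))"
      using pq(2) d0 q' by (simp add: powr_mult)
    also have "\<dots> \<le> c * (real_of_int d * real_of_int q' powr (1 - \<nu>))"
    proof -
      have "real_of_int d powr (1 - \<nu>) \<le> 1" using powr_mono[of "1-\<nu>" 0 "real_of_int d"] d0 nu1 by simp
      also have "1 \<le> real_of_int d" using d0 by simp
      finally show ?thesis using cpos by (intro mult_left_mono mult_right_mono) auto
    qed
    also have "\<dots> = real_of_int d * (c * real_of_int q' powr (1 - \<nu>))" by simp
    also have "\<dots> \<le> real_of_int d * \<bar>real_of_int q' * \<alpha> - real_of_int p'\<bar>"
      using cop[OF q' cp] d0 by (intro mult_left_mono) auto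
    also have "\<dots> = \<bar>real_of_int q * \<alpha> - real_of_int p\<bar>"
    proof -
      have "real_of_int d * \<bar>real_of_int q' * \<alpha> - real_of_int p'\<bar> = \<bar>real_of_int d * (real_of_int q' * \<alpha> - real_of_int p')\<bar>"
        using d0 by (simp add: abs_mult)
      then show ?thesis using pq by (simp add: algebra_simps)
    qed
    finally show ?thesis .
  qed
  then show ?thesis using cpos by blast
qed

lemma sq_powr: "(x::real) > 0 \<Longrightarrow> (x powr a)\<^sup>2 = x powr (2 * a)"
  by (simp add: power2_eq_square powr_add[symmetric])

lemma jbrv_ge1: "jbrv n \<ge> 1"
  unfolding jbrv_def by simp

lemma jbrv_fst: "\<bar>real_of_int (fst n)\<bar> \<le> jbrv n"
  unfolding jbrv_def by (rule real_le_rsqrt) simp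

lemma jbrv_snd: "\<bar>real_of_int (snd n)\<bar> \<le> jbrv n"
  unfolding jbrv_def by (rule real_le_rsqrt) simp

lemma wdot_upper: "\<bar>wdot \<omega> n\<bar> \<le> (\<bar>fst \<omega>\<bar> + \<bar>snd \<omega>\<bar>) * jbrv n"
proof -
  have "\<bar>wdot \<omega> n\<bar> \<le> \<bar>fst \<omega>\<bar> * \<bar>real_of_int (fst n)\<bar> + \<bar>snd \<omega>\<bar> * \<bar>real_of_int (snd n)\<bar>"
    unfolding wdot_def by (metis abs_mult abs_triangle_ineq)
  also have "\<dots> \<le> \<bar>fst \<omega>\<bar> * jbrv n + \<bar>snd \<omega>\<bar> * jbrv n"
    by (intro add_mono mult_left_mono jbrv_fst jbrv_snd) auto
  finally show ?thesis by (simp add: algebra_simps)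
qed

lemma wdot_lower:
  fixes \<omega> :: "real \<times> real" and c \<nu> :: real
  assumes w2: "snd \<omega> \<noteq> 0" and c: "c > 0" "c \<le> 1" and nu1: "\<nu> \<ge> 1"
    and dio: "\<forall>p q::int. q > 0 \<longrightarrow> \<bar>real_of_int q * (fst \<omega> / snd \<omega>) - real_of_int p\<bar> \<ge> c * real_of_int q powr (1 - \<nu>)"
    and n0: "n \<noteq> 0"
  shows "\<bar>wdot \<omega> n\<bar> \<ge> \<bar>snd \<omega>\<bar> * c * jbrv n powr (1 - \<nu>)"
proof -
  obtain a b where n: "n = (a, b)" by fastforce
  define \<alpha> where "\<alpha> = fst \<omega> / snd \<omega>"
  have wd: "wdot \<omega> n = snd \<omega> * (real_of_int a * \<alpha> + real_of_int b)"
    using w2 by (simp add: wdot_def n \<alpha>_def field_simps)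
  have J1: "jbrv n \<ge> 1" by (rule jbrv_ge1)
  have Jle1: "jbrv n powr (1 - \<nu>) \<le> 1"
    using powr_mono[of "1-\<nu>" 0 "jbrv n"] J1 nu1 by simp
  have key: "\<bar>real_of_int a * \<alpha> + real_of_int b\<bar> \<ge> c * jbrv n powr (1 - \<nu>)"
  proof (cases "a = 0")
    case True
    then have "b \<noteq> 0" using n0 n by (auto simp: zero_prod_def)
    then have "\<bar>real_of_int a * \<alpha> + real_of_int b\<bar> \<ge> 1" using True by simp
    moreover have "c * jbrv n powr (1 - \<nu>) \<le> 1"
      using c Jle1 by (metis less_eq_real_def mult_le_one powr_ge_zero)
    ultimately show ?thesis by linarith
  next
    case False
    define q where "q = \<bar>a\<bar>"
    define p where "p = (if a > 0 then - b else b)"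
    have q0: "q > 0" using False by (simp add: q_def)
    have eq: "\<bar>real_of_int a * \<alpha> + real_of_int b\<bar> = \<bar>real_of_int q * \<alpha> - real_of_int p\<bar>"
    proof (cases "a > 0")
      case True then show ?thesis by (simp add: q_def p_def)
    next
      case False
      then have "real_of_int q * \<alpha> - real_of_int p = - (real_of_int a * \<alpha> + real_of_int b)"
        by (simp add: q_def p_def)
      then show ?thesis by simp
    qed
    have "c * jbrv n powr (1 - \<nu>) \<le> c * real_of_int q powr (1 - \<nu>)"
    proof -
      have "real_of_int q \<le> jbrv n" using jbrv_fst[of n] by (simp add: q_def n)
      then have "jbrv n powr (1 - \<nu>) \<le> real_of_int q powr (1 - \<nu>)"
        using q0 nu1 by (intro powr_mono2') auto
      then show ?thesis using c by simp
    qed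
    also have "\<dots> \<le> \<bar>real_of_int q * \<alpha> - real_of_int p\<bar>" using dio q0 by (simp add: \<alpha>_def)
    finally show ?thesis using eq by simp
  qed
  have "\<bar>snd \<omega>\<bar> * (c * jbrv n powr (1 - \<nu>)) \<le> \<bar>snd \<omega>\<bar> * \<bar>real_of_int a * \<alpha> + real_of_int b\<bar>"
    using key by (intro mult_left_mono) auto
  then show ?thesis by (simp add: wd abs_mult mult.assoc)
qed

lemma weight1_bound:
  assumes "\<sigma> + 1 \<le> s"
  shows "(jbrv n powr \<sigma> * jbr (wdot \<omega> n))\<^sup>2 \<le> (1 + (\<bar>fst \<omega>\<bar> + \<bar>snd \<omega>\<bar>)\<^sup>2) * jbrv n powr (2 * s)"
proof -
  define J where "J = jbrv n"
  define M where "M = \<bar>fst \<omega>\<bar> + \<bar>snd \<omega>\<bar>"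
  have J1: "J \<ge> 1" by (simp add: J_def jbrv_ge1)
  have M0: "M \<ge> 0" by (simp add: M_def)
  have x: "\<bar>wdot \<omega> n\<bar> \<le> M * J" using wdot_upper by (simp add: J_def M_def)
  have "(wdot \<omega> n)\<^sup>2 \<le> (M * J)\<^sup>2"
    using x M0 J1 abs_le_square_iff[of "wdot \<omega> n" "M * J"] by simp
  then have jb: "(jbr (wdot \<omega> n))\<^sup>2 \<le> (1 + M\<^sup>2) * J\<^sup>2"
  proof -
    assume h: "(wdot \<omega> n)\<^sup>2 \<le> (M * J)\<^sup>2"
    have "1 \<le> J\<^sup>2" using J1 by (simp add: one_le_power)
    then show ?thesis using h unfolding jbr_def by (simp add: power_mult_distrib algebra_simps)
  qed
  have "(J powr \<sigma> * jbr (wdot \<omega> n))\<^sup>2 = J powr (2 * \<sigma>) * (jbr (wdot \<omega> n))\<^sup>2"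
    using J1 by (simp add: power_mult_distrib sq_powr)
  also have "\<dots> \<le> J powr (2 * \<sigma>) * ((1 + M\<^sup>2) * J\<^sup>2)"
    by (intro mult_left_mono jb) auto
  also have "\<dots> = (1 + M\<^sup>2) * J powr (2 * \<sigma> + 2)"
    using J1 by (simp add: powr_add powr_realpow)
  also have "\<dots> \<le> (1 + M\<^sup>2) * J powr (2 * s)"
    using J1 assms by (intro mult_left_mono powr_mono) auto
  finally show ?thesis by (simp add: J_def M_def)
qed

lemma weight2_bound:
  assumes K: "K > 0" and low: "\<bar>wdot \<omega> n\<bar> \<ge> K * jbrv n powr (1 - \<nu>)"
    and le: "\<sigma> + \<nu> - 1 \<le> s"
  shows "(jbrv n powr \<sigma>)\<^sup>2 / (2 * pi * wdot \<omega> n)\<^sup>2 \<le> (1 / (2 * pi * K)\<^sup>2) * jbrv n powr (2 * s)"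
proof -
  define J where "J = jbrv n"
  have J1: "J \<ge> 1" by (simp add: J_def jbrv_ge1)
  have L0: "K * J powr (1 - \<nu>) > 0" using K J1 by simp
  have "(2 * pi * (K * J powr (1 - \<nu>)))\<^sup>2 \<le> (2 * pi * wdot \<omega> n)\<^sup>2"
  proof -
    have "2 * pi * (K * J powr (1 - \<nu>)) \<le> \<bar>2 * pi * wdot \<omega> n\<bar>"
      using low by (simp add: J_def abs_mult)
    then have "\<bar>2 * pi * (K * J powr (1 - \<nu>))\<bar> \<le> \<bar>2 * pi * wdot \<omega> n\<bar>" using L0 by simp
    then show ?thesis by (simp only: abs_le_square_iff)
  qed
  moreover have pos: "(2 * pi * (K * J powr (1 - \<nu>)))\<^sup>2 > 0" using L0 by (intro zero_less_power) simp
  moreover note pos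
  ultimately have "(J powr \<sigma>)\<^sup>2 / (2 * pi * wdot \<omega> n)\<^sup>2 \<le> (J powr \<sigma>)\<^sup>2 / (2 * pi * (K * J powr (1 - \<nu>)))\<^sup>2"
    by (intro divide_left_mono mult_pos_pos) auto
  also have "\<dots> = (1 / (2 * pi * K)\<^sup>2) * (J powr (2 * \<sigma>) / J powr (2 - 2 * \<nu>))"
  proof -
    have "(2 * pi * (K * J powr (1 - \<nu>)))\<^sup>2 = (2 * pi * K)\<^sup>2 * J powr (2 - 2 * \<nu>)"
      using J1 by (simp add: power_mult_distrib sq_powr algebra_simps)
    moreover have "(J powr \<sigma>)\<^sup>2 = J powr (2 * \<sigma>)" using J1 by (simp add: sq_powr)
    ultimately show ?thesis using K J1 by simp
  qed
  also have "J powr (2 * \<sigma>) / J powr (2 - 2 * \<nu>) = J powr (2 * \<sigma> + 2 * \<nu> - 2)"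
    using J1 by (simp add: powr_diff[symmetric] algebra_simps)
  also have "(1 / (2 * pi * K)\<^sup>2) * J powr (2 * \<sigma> + 2 * \<nu> - 2) \<le> (1 / (2 * pi * K)\<^sup>2) * J powr (2 * s)"
    using J1 le by (intro mult_left_mono powr_mono) auto
  finally show ?thesis by (simp add: J_def)
qed

lemma Y_bound_general:
  fixes \<sigma> s :: real and \<omega> :: "real \<times> real" and C1 C2 :: real
  assumes C1: "C1 \<ge> 0" and C2: "C2 \<ge> 0"
    and h1: "\<And>n. (jbrv n powr \<sigma> * jbr (wdot \<omega> n))\<^sup>2 \<le> C1 * jbrv n powr (2 * s)"
    and h2: "\<And>n. n \<noteq> 0 \<Longrightarrow> (jbrv n powr \<sigma>)\<^sup>2 / (2 * pi * wdot \<omega> n)\<^sup>2 \<le> C2 * jbrv n powr (2 * s)"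
    and u: "u \<in> Hs_space s"
  shows "Y_fin \<sigma> \<omega> u \<and> Y_norm \<sigma> \<omega> u \<le> (sqrt C1 + sqrt C2) * Hs_norm s u"
proof -
  have hs: "Hs_weight s u summable_on UNIV" using u by (simp add: Hs_space_def)
  have hnn: "Hs_weight s u n \<ge> 0" for n by (simp add: Hs_weight_def)
  have b1: "Y_weight1 \<sigma> \<omega> u n \<le> C1 * Hs_weight s u n" for n
    using mult_right_mono[OF h1[of n], of "(cmod (u n))\<^sup>2"]
    by (simp add: Y_weight1_def Hs_weight_def mult.assoc)
  have b2: "Y_weight2 \<sigma> \<omega> u n \<le> C2 * Hs_weight s u n" for n
  proof (cases "n = 0")
    case True then show ?thesis using C2 hnn by (simp add: Y_weight2_def)
  next
    case False
    have "Y_weight2 \<sigma> \<omega> u n = ((jbrv n powr \<sigma>)\<^sup>2 / (2 * pi * wdot \<omega> n)\<^sup>2) * (cmod (u n))\<^sup>2"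
      using False by (simp add: Y_weight2_def)
    also have "\<dots> \<le> (C2 * jbrv n powr (2 * s)) * (cmod (u n))\<^sup>2"
      by (intro mult_right_mono h2 False) auto
    finally show ?thesis by (simp add: Hs_weight_def mult.assoc)
  qed
  have n1: "Y_weight1 \<sigma> \<omega> u n \<ge> 0" for n by (simp add: Y_weight1_def)
  have n2: "Y_weight2 \<sigma> \<omega> u n \<ge> 0" for n by (simp add: Y_weight2_def)
  have cs1: "(\<lambda>n. C1 * Hs_weight s u n) summable_on UNIV" by (rule summable_on_cmult_right[OF hs])
  have cs2: "(\<lambda>n. C2 * Hs_weight s u n) summable_on UNIV" by (rule summable_on_cmult_right[OF hs])
  have s1: "Y_weight1 \<sigma> \<omega> u summable_on UNIV"
    by (rule summable_on_comparison_test[OF cs1]) (use b1 n1 in auto)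
  have s2: "Y_weight2 \<sigma> \<omega> u summable_on UNIV"
    by (rule summable_on_comparison_test[OF cs2]) (use b2 n2 in auto)
  define S where "S = infsum (Hs_weight s u) UNIV"
  have S0: "S \<ge> 0" unfolding S_def by (rule infsum_nonneg) (simp add: hnn)
  have i1: "infsum (Y_weight1 \<sigma> \<omega> u) UNIV \<le> C1 * S"
  proof -
    have "infsum (Y_weight1 \<sigma> \<omega> u) UNIV \<le> infsum (\<lambda>n. C1 * Hs_weight s u n) UNIV"
      by (rule infsum_mono[OF s1 cs1]) (simp add: b1)
    also have "\<dots> = C1 * S" unfolding S_def by (rule infsum_cmult_right) (simp add: hs)
    finally show ?thesis .
  qed
  have i2: "infsum (Y_weight2 \<sigma> \<omega> u) UNIV \<le> C2 * S"
  proof -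
    have "infsum (Y_weight2 \<sigma> \<omega> u) UNIV \<le> infsum (\<lambda>n. C2 * Hs_weight s u n) UNIV"
      by (rule infsum_mono[OF s2 cs2]) (simp add: b2)
    also have "\<dots> = C2 * S" unfolding S_def by (rule infsum_cmult_right) (simp add: hs)
    finally show ?thesis .
  qed
  have "Y_norm \<sigma> \<omega> u \<le> sqrt (C1 * S) + sqrt (C2 * S)"
    unfolding Y_norm_def using i1 i2 by (intro add_mono real_sqrt_le_mono)
  also have "\<dots> = (sqrt C1 + sqrt C2) * Hs_norm s u"
    by (simp add: Hs_norm_def S_def real_sqrt_mult algebra_simps)
  finally show ?thesis using s1 s2 by (simp add: Y_fin_def)
qed

definition Bx :: "nat \<Rightarrow> (int \<times> int) set" where
  "Bx k = {- int k..int k} \<times> {- int k..int k}"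

lemma finite_Bx: "finite (Bx k)" by (simp add: Bx_def)

lemma Bx_mono: "m \<le> k \<Longrightarrow> Bx m \<subseteq> Bx k"
  unfolding Bx_def by auto

lemma filterlim_Bx: "filterlim Bx (finite_subsets_at_top UNIV) sequentially"
  unfolding filterlim_finite_subsets_at_top
proof (safe, goal_cases)
  case (1 X)
  define m where "m = Max (insert 0 ((\<lambda>x. nat \<bar>fst x\<bar> + nat \<bar>snd x\<bar>) ` X))"
  have "X \<subseteq> Bx m"
  proof
    fix x assume x: "x \<in> X"
    have "nat \<bar>fst x\<bar> + nat \<bar>snd x\<bar> \<le> m" unfolding m_def using 1 x by (intro Max_ge) auto
    then show "x \<in> Bx m" by (cases x) (auto simp: Bx_def)
  qed
  moreover have "eventually (\<lambda>k. k \<ge> m) sequentially" by (rule eventually_ge_at_top)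
  ultimately show ?case
    by (elim eventually_mono) (use Bx_mono finite_Bx in blast)
qed

lemma tail_Hs:
  assumes u: "u \<in> Hs_space s"
  shows "(\<lambda>n. if n \<in> Bx k then 0 else u n) \<in> Hs_space s"
    and "(\<lambda>k. Hs_norm s (\<lambda>n. if n \<in> Bx k then 0 else u n)) \<longlonglongrightarrow> 0"
proof -
  define w where "w = Hs_weight s u"
  define S where "S = infsum w UNIV"
  have hs: "w summable_on UNIV" using u by (simp add: Hs_space_def w_def)
  have wnn: "w n \<ge> 0" for n by (simp add: Hs_weight_def w_def)
  have tw: "Hs_weight s (\<lambda>n. if n \<in> Bx k then 0 else u n) = (\<lambda>n. if n \<in> Bx k then 0 else w n)" for k
    by (auto simp: Hs_weight_def w_def)
  have tsum: "(\<lambda>n. if n \<in> Bx k then 0 else w n) summable_on UNIV" for k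
    by (rule summable_on_comparison_test[OF hs]) (auto simp: wnn)
  then show "(\<lambda>n. if n \<in> Bx k then 0 else u n) \<in> Hs_space s"
    by (simp add: Hs_space_def tw)
  have tinf: "infsum (\<lambda>n. if n \<in> Bx k then 0 else w n) UNIV = S - sum w (Bx k)" for k
  proof -
    define h where "h = (\<lambda>n. if n \<in> Bx k then w n else 0)"
    have "(w has_sum sum w (Bx k)) (Bx k)" by (rule has_sum_finite) (simp add: finite_Bx)
    then have hh: "(h has_sum sum w (Bx k)) UNIV"
      using has_sum_cong_neutral[where f=h and g=w and S=UNIV and T="Bx k"] by (auto simp: h_def)
    have "((\<lambda>n. (if n \<in> Bx k then 0 else w n) + h n) has_sum
           (infsum (\<lambda>n. if n \<in> Bx k then 0 else w n) UNIV + sum w (Bx k))) UNIV"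
      by (rule has_sum_add[OF has_sum_infsum[OF tsum] hh])
    moreover have "(\<lambda>n. (if n \<in> Bx k then 0 else w n) + h n) = w" by (auto simp: h_def)
    ultimately have "(w has_sum (infsum (\<lambda>n. if n \<in> Bx k then 0 else w n) UNIV + sum w (Bx k))) UNIV"
      by simp
    then have "infsum w UNIV = infsum (\<lambda>n. if n \<in> Bx k then 0 else w n) UNIV + sum w (Bx k)"
      by (simp add: infsumI)
    then show ?thesis by (simp add: S_def)
  qed
  have "(sum w \<longlongrightarrow> S) (finite_subsets_at_top UNIV)"
    using has_sum_infsum[OF hs] by (simp add: has_sum_def S_def)
  then have "(\<lambda>k. sum w (Bx k)) \<longlonglongrightarrow> S"
    by (rule filterlim_compose[OF _ filterlim_Bx])
  then have "(\<lambda>k. S - sum w (Bx k)) \<longlonglongrightarrow> S - S"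
    by (intro tendsto_diff tendsto_const)
  then have "(\<lambda>k. sqrt (S - sum w (Bx k))) \<longlonglongrightarrow> sqrt 0"
    by (intro tendsto_real_sqrt) simp
  then show "(\<lambda>k. Hs_norm s (\<lambda>n. if n \<in> Bx k then 0 else u n)) \<longlonglongrightarrow> 0"
    by (simp add: Hs_norm_def tw tinf)
qed

theorem lemma7p1:
  fixes \<omega> :: "real \<times> real" and s \<sigma> :: real
  assumes "snd \<omega> \<noteq> 0"
    and "fst \<omega> / snd \<omega> \<notin> \<rat>"
    and "bdd_above (approx_exponents (fst \<omega> / snd \<omega>))"
    and "0 \<le> \<sigma>"
    and "\<sigma> < s - irr_measure (fst \<omega> / snd \<omega>) + 1"
  shows "Hs_space s \<subseteq> Y_space \<sigma> \<omega> \<and>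
         (\<exists>C. \<forall>u \<in> Hs_space s. Y_norm \<sigma> \<omega> u \<le> C * Hs_norm s u)"
proof -
  define \<alpha> where "\<alpha> = fst \<omega> / snd \<omega>"
  define \<mu> where "\<mu> = irr_measure \<alpha>"
  have w2: "snd \<omega> \<noteq> 0" using assms(1) .
  have irr: "\<alpha> \<notin> \<rat>" using assms(2) by (simp add: \<alpha>_def)
  have bdd: "bdd_above (approx_exponents \<alpha>)" using assms(3) by (simp add: \<alpha>_def)
  have sm: "\<sigma> < s - \<mu> + 1" using assms(5) by (simp add: \<alpha>_def \<mu>_def)
  have "infinite (approx_set \<alpha>)" using irr rational_iff_finite_approx_set by blast
  moreover have "approx_set \<alpha> \<subseteq> {(p, q). (q::int) > 0 \<and> coprime (p::int) q \<and>
                \<bar>\<alpha> - real_of_int p / real_of_int q\<bar> < real_of_int q powr (-2)}"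
  proof
    fix x assume "x \<in> approx_set \<alpha>"
    then obtain h k where x: "x = (h, k)" "k > 0" "coprime h k" "\<bar>\<alpha> - of_int h / of_int k\<bar> < 1/(real_of_int k)\<^sup>2"
      by (auto simp: approx_set_def)
    have "real_of_int k powr (-2) = 1/(real_of_int k)\<^sup>2"
      using x(2) by (simp add: powr_minus divide_inverse)
    then show "x \<in> {(p, q). (q::int) > 0 \<and> coprime (p::int) q \<and>
                \<bar>\<alpha> - real_of_int p / real_of_int q\<bar> < real_of_int q powr (-2)}"
      using x by simp
  qed
  ultimately have "2 \<in> approx_exponents \<alpha>"
    unfolding approx_exponents_def using infinite_super by auto
  then have mu2: "\<mu> \<ge> 2" unfolding \<mu>_def irr_measure_def using bdd by (rule cSup_upper)
  define \<nu> where "\<nu> = (\<mu> + (s - \<sigma> + 1)) / 2"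
  have nu_gt: "\<nu> > \<mu>" and nu_lt: "\<nu> < s - \<sigma> + 1" using sm by (auto simp: \<nu>_def)
  have nu1: "\<nu> \<ge> 1" using nu_gt mu2 by simp
  have nuE: "\<nu> \<notin> approx_exponents \<alpha>"
  proof
    assume "\<nu> \<in> approx_exponents \<alpha>"
    then have "\<nu> \<le> \<mu>" unfolding \<mu>_def irr_measure_def using bdd by (rule cSup_upper)
    then show False using nu_gt by simp
  qed
  obtain c where c0: "c > 0" and dio: "\<forall>p q::int. q > 0 \<longrightarrow> \<bar>real_of_int q * \<alpha> - real_of_int p\<bar> \<ge> c * real_of_int q powr (1 - \<nu>)"
    using dioph_bound[OF irr nu1 nuE] by blast
  define c' where "c' = min c 1"
  have c'0: "c' > 0" "c' \<le> 1" using c0 by (auto simp: c'_def)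
  have dio': "\<forall>p q::int. q > 0 \<longrightarrow> \<bar>real_of_int q * (fst \<omega> / snd \<omega>) - real_of_int p\<bar> \<ge> c' * real_of_int q powr (1 - \<nu>)"
  proof (intro allI impI)
    fix p q :: int assume q: "q > 0"
    have "c' * real_of_int q powr (1 - \<nu>) \<le> c * real_of_int q powr (1 - \<nu>)"
      by (intro mult_right_mono) (auto simp: c'_def)
    then show "\<bar>real_of_int q * (fst \<omega> / snd \<omega>) - real_of_int p\<bar> \<ge> c' * real_of_int q powr (1 - \<nu>)"
      using dio q unfolding \<alpha>_def by (meson order_trans)
  qed
  define K where "K = \<bar>snd \<omega>\<bar> * c'"
  have K0: "K > 0" using w2 c'0 by (simp add: K_def)
  define C1 where "C1 = 1 + (\<bar>fst \<omega>\<bar> + \<bar>snd \<omega>\<bar>)\<^sup>2"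
  define C2 where "C2 = 1 / (2 * pi * K)\<^sup>2"
  have C1: "C1 \<ge> 0" by (simp add: C1_def)
  have C2: "C2 \<ge> 0" by (simp add: C2_def)
  have h1: "(jbrv n powr \<sigma> * jbr (wdot \<omega> n))\<^sup>2 \<le> C1 * jbrv n powr (2 * s)" for n
    unfolding C1_def by (rule weight1_bound) (use sm mu2 in linarith)
  have h2: "(jbrv n powr \<sigma>)\<^sup>2 / (2 * pi * wdot \<omega> n)\<^sup>2 \<le> C2 * jbrv n powr (2 * s)" if n0: "n \<noteq> 0" for n
  proof -
    have "\<bar>wdot \<omega> n\<bar> \<ge> \<bar>snd \<omega>\<bar> * c' * jbrv n powr (1 - \<nu>)"
      by (rule wdot_lower[OF w2 c'0 nu1 dio' n0])
    then have low: "\<bar>wdot \<omega> n\<bar> \<ge> K * jbrv n powr (1 - \<nu>)" by (simp add: K_def)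
    show ?thesis unfolding C2_def by (rule weight2_bound[OF K0 low]) (use nu_lt in linarith)
  qed
  have gen: "Y_fin \<sigma> \<omega> u \<and> Y_norm \<sigma> \<omega> u \<le> (sqrt C1 + sqrt C2) * Hs_norm s u"
    if "u \<in> Hs_space s" for u
  proof (rule Y_bound_general)
    show "C1 \<ge> 0" by (rule C1)
    show "C2 \<ge> 0" by (rule C2)
    show "(jbrv n powr \<sigma> * jbr (wdot \<omega> n))\<^sup>2 \<le> C1 * jbrv n powr (2 * s)" for n by (rule h1)
    show "(jbrv n powr \<sigma>)\<^sup>2 / (2 * pi * wdot \<omega> n)\<^sup>2 \<le> C2 * jbrv n powr (2 * s)" if "n \<noteq> 0" for n
      by (rule h2[OF that])
    show "u \<in> Hs_space s" by (rule that)
  qed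
  define C where "C = sqrt C1 + sqrt C2"
  have part2: "\<forall>u \<in> Hs_space s. Y_norm \<sigma> \<omega> u \<le> C * Hs_norm s u"
    using gen by (simp add: C_def)
  have C0: "C \<ge> 0" using C1 C2 by (simp add: C_def)
  have part1: "u \<in> Y_space \<sigma> \<omega>" if u: "u \<in> Hs_space s" for u
  proof -
    define f where "f = (\<lambda>k n. if n \<in> Bx k then u n else 0)"
    have diff: "(\<lambda>n. u n - f k n) = (\<lambda>n. if n \<in> Bx k then 0 else u n)" for k
      by (auto simp: f_def)
    have sm: "smooth_coeffs (f k)" for k
      unfolding smooth_coeffs_def
    proof
      fix N :: nat
      show "\<exists>C. \<forall>n. jbrv n ^ N * cmod (f k n) \<le> C"
      proof (intro exI allI)
        fix n
        show "jbrv n ^ N * cmod (f k n) \<le> (\<Sum>m\<in>Bx k. jbrv m ^ N * cmod (u m))"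
        proof (cases "n \<in> Bx k")
          case True
          then show ?thesis using finite_Bx[of k]
            by (simp add: f_def) (rule member_le_sum, auto simp: jbrv_def)
        next
          case False
          then show ?thesis by (simp add: f_def) (rule sum_nonneg, auto simp: jbrv_def)
        qed
      qed
    qed
    have tH: "(\<lambda>n. u n - f k n) \<in> Hs_space s" for k
      unfolding diff by (rule tail_Hs(1)[OF u])
    have fin: "Y_fin \<sigma> \<omega> (\<lambda>n. u n - f k n)" for k
      using gen[OF tH] by blast
    have le: "Y_norm \<sigma> \<omega> (\<lambda>n. u n - f k n) \<le> C * Hs_norm s (\<lambda>n. u n - f k n)" for k
      using gen[OF tH] by (simp add: C_def)
    have ge: "Y_norm \<sigma> \<omega> (\<lambda>n. u n - f k n) \<ge> 0" for k
    proof -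
      have "infsum (Y_weight1 \<sigma> \<omega> (\<lambda>n. u n - f k n)) UNIV \<ge> 0"
        by (rule infsum_nonneg) (simp add: Y_weight1_def)
      moreover have "infsum (Y_weight2 \<sigma> \<omega> (\<lambda>n. u n - f k n)) UNIV \<ge> 0"
        by (rule infsum_nonneg) (simp add: Y_weight2_def)
      ultimately show ?thesis by (simp add: Y_norm_def)
    qed
    have lim0: "(\<lambda>k. C * Hs_norm s (\<lambda>n. u n - f k n)) \<longlonglongrightarrow> C * 0"
      unfolding diff by (intro tendsto_mult_left tail_Hs(2)[OF u])
    have "(\<lambda>k. Y_norm \<sigma> \<omega> (\<lambda>n. u n - f k n)) \<longlonglongrightarrow> 0"
    proof (rule tendsto_sandwich[OF _ _ tendsto_const])
      show "\<forall>\<^sub>F k in sequentially. 0 \<le> Y_norm \<sigma> \<omega> (\<lambda>n. u n - f k n)"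
        by (rule always_eventually) (use ge in blast)
      show "\<forall>\<^sub>F k in sequentially. Y_norm \<sigma> \<omega> (\<lambda>n. u n - f k n) \<le> C * Hs_norm s (\<lambda>n. u n - f k n)"
        by (rule always_eventually) (use le in blast)
      show "(\<lambda>k. C * Hs_norm s (\<lambda>n. u n - f k n)) \<longlonglongrightarrow> 0" using lim0 by simp
    qed
    then show ?thesis unfolding Y_space_def using sm fin by blast
  qed
  show ?thesis using part1 part2 by blast
qed

end
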